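(* Let $\mathcal H=(V,E)$ be a hypergraph with splitting functions and let $R\subseteq V$ with $\mathrm{vol}(R)>0$ and $\mathrm{vol}(\bar R)>0$. Let $\varepsilon\ge\varepsilon_0=\mathrm{vol}(R)/\mathrm{vol}(\bar R)$. Then for every $S\subseteq V$ with $\Omega_{R,\varepsilon}(S)>0$, we have $\mathrm{vol}(S)>0$, $\mathrm{vol}(\bar S)>0$, and $$\frac{\mathrm{vol}(\bar R)}{\mathrm{vol}(V)}\,\mathrm{ncut}(S)\le\mathrm{HLC}(S).$$
   Context: A hypergraph $\mathcal H=(V,E)$ has a finite node set $V$, and each hyperedge $e\in E$ is a subset of $V$. Each hyperedge $e$ carries a splitting function $w_e:2^e\to\mathbb R_{\ge0}$ satisfying $w_e(A)=w_e(e\setminus A)$ for all $A\subseteq e$ and $w_e(\emptyset)=w_e(e)=0$. For $S\subseteq V$, $\mathrm{cut}_{\mathcal H}(S)=\sum_{e\in E}w_e(e\cap S)$. The degree of $v$ is $d_v=\sum_{e\ni v}w_e(\{v\})$, and $\mathrm{vol}(S)=\sum_{v\in S}d_v$. Write $\bar S=V\setminus S$. Hypergraph normalized cut is $\mathrm{ncut}(S)=\frac{\mathrm{cut}_{\mathcal H}(S)}{\mathrm{vol}(S)}+\frac{\mathrm{cut}_{\mathcal H}(\bar S)}{\mathrm{vol}(\bar S)}$. Define $\Omega_{R,\varepsilon}(S)=\mathrm{vol}(S\cap R)-\varepsilon\,\mathrm{vol}(S\cap\bar R)$. Set $\mathrm{HLC}(S)=\mathrm{cut}_{\mathcal H}(S)/\Omega_{R,\varepsilon}(S)$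 if $\Omega_{R,\varepsilon}(S)>0$, and $\mathrm{HLC}(S)=\infty$ otherwise. *)

theory Defs
  imports Main "HOL-Library.Extended_Real"
begin

definition hypergraph_sf ::
  "'a set \<Rightarrow> 'e set \<Rightarrow> ('e \<Rightarrow> 'a set) \<Rightarrow> ('e \<Rightarrow> 'a set \<Rightarrow> real) \<Rightarrow> bool" where
  "hypergraph_sf V E edge w \<longleftrightarrow>
     finite V \<and> finite E \<and>
     (\<forall>e\<in>E. edge e \<subseteq> V) \<and>
     (\<forall>e\<in>E. \<forall>A. A \<subseteq> edge e \<longrightarrow> w e A \<ge> 0) \<and>
     (\<forall>e\<in>E. \<forall>A. A \<subseteq> edge e \<longrightarrow> w e A = w e (edge e - A)) \<and>
     (\<forall>e\<in>E. w e {} = 0 \<and> w e (edge e) = 0)"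

definition hcut :: "'e set \<Rightarrow> ('e \<Rightarrow> 'a set) \<Rightarrow> ('e \<Rightarrow> 'a set \<Rightarrow> real) \<Rightarrow> 'a set \<Rightarrow> real" where
  "hcut E edge w S = (\<Sum>e\<in>E. w e (edge e \<inter> S))"

definition hdeg :: "'e set \<Rightarrow> ('e \<Rightarrow> 'a set) \<Rightarrow> ('e \<Rightarrow> 'a set \<Rightarrow> real) \<Rightarrow> 'a \<Rightarrow> real" where
  "hdeg E edge w v = (\<Sum>e\<in>{e\<in>E. v \<in> edge e}. w e {v})"

definition hvol :: "'e set \<Rightarrow> ('e \<Rightarrow> 'a set) \<Rightarrow> ('e \<Rightarrow> 'a set \<Rightarrow> real) \<Rightarrow> 'a set \<Rightarrow> real" where
  "hvol E edge w S = (\<Sum>v\<in>S. hdeg E edge w v)"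

definition ncut :: "'a set \<Rightarrow> 'e set \<Rightarrow> ('e \<Rightarrow> 'a set) \<Rightarrow> ('e \<Rightarrow> 'a set \<Rightarrow> real) \<Rightarrow> 'a set \<Rightarrow> real" where
  "ncut V E edge w S =
     hcut E edge w S / hvol E edge w S + hcut E edge w (V - S) / hvol E edge w (V - S)"

definition Omega :: "'a set \<Rightarrow> 'e set \<Rightarrow> ('e \<Rightarrow> 'a set) \<Rightarrow> ('e \<Rightarrow> 'a set \<Rightarrow> real)
    \<Rightarrow> 'a set \<Rightarrow> real \<Rightarrow> 'a set \<Rightarrow> real" where
  "Omega V E edge w R \<epsilon> S = hvol E edge w (S \<inter> R) - \<epsilon> * hvol E edge w (S \<inter> (V - R))"

definition HLC :: "'a set \<Rightarrow> 'e set \<Rightarrow> ('e \<Rightarrow> 'a set) \<Rightarrow> ('e \<Rightarrow> 'a set \<Rightarrow> real)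
    \<Rightarrow> 'a set \<Rightarrow> real \<Rightarrow> 'a set \<Rightarrow> ereal" where
  "HLC V E edge w R \<epsilon> S =
     (if Omega V E edge w R \<epsilon> S > 0
      then ereal (hcut E edge w S / Omega V E edge w R \<epsilon> S) else \<infinity>)"

end

theory Submission
  imports Defs
begin

lemma hsf_D1: assumes "hypergraph_sf V E edge w" shows "finite V"
  by (insert assms, unfold hypergraph_sf_def, elim conjE, assumption)

lemma hsf_D2: assumes "hypergraph_sf V E edge w" shows "\<forall>e\<in>E. edge e \<subseteq> V"
  by (insert assms, unfold hypergraph_sf_def, elim conjE, assumption)

lemma hsf_D3: assumes "hypergraph_sf V E edge w" shows "\<forall>e\<in>E. \<forall>A. A \<subseteq> edge e \<longrightarrow> w e A \<ge> 0"
  by (insert assms, unfold hypergraph_sf_def, elim conjE, assumption)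

lemma hsf_D4: assumes "hypergraph_sf V E edge w" shows "\<forall>e\<in>E. \<forall>A. A \<subseteq> edge e \<longrightarrow> w e A = w e (edge e - A)"
  by (insert assms, unfold hypergraph_sf_def, elim conjE, assumption)

lemma hcut_compl:
  assumes H: "hypergraph_sf V E edge w"
  shows "hcut E edge w (V - S) = hcut E edge w S"
proof -
  have "\<And>e. e \<in> E \<Longrightarrow> w e (edge e \<inter> (V - S)) = w e (edge e \<inter> S)"
  proof -
    fix e assume e: "e \<in> E"
    have sub: "edge e \<subseteq> V" using bspec[OF hsf_D2[OF H] e] .
    have 1: "edge e \<inter> (V - S) = edge e - (edge e \<inter> S)" using sub by auto
    have 2: "w e (edge e \<inter> S) = w e (edge e - (edge e \<inter> S))"
      using spec[OF bspec[OF hsf_D4[OF H] e], of "edge e \<inter> S"] by simp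
    show "w e (edge e \<inter> (V - S)) = w e (edge e \<inter> S)" unfolding 1 using 2 by (rule sym)
  qed
  thus ?thesis unfolding hcut_def by (rule sum.cong[OF refl])
qed

lemma hdeg_nonneg:
  assumes H: "hypergraph_sf V E edge w"
  shows "hdeg E edge w v \<ge> 0"
proof -
  have "\<forall>e\<in>E. \<forall>A. A \<subseteq> edge e \<longrightarrow> w e A \<ge> 0" using hsf_D3[OF H] .
  thus ?thesis unfolding hdeg_def by (intro sum_nonneg) auto
qed

lemma hvol_nonneg:
  assumes H: "hypergraph_sf V E edge w"
  shows "hvol E edge w S \<ge> 0"
  unfolding hvol_def using hdeg_nonneg[OF H] by (intro sum_nonneg) auto

lemma hvol_split:
  assumes "finite A"
  shows "hvol E edge w A = hvol E edge w (A \<inter> B) + hvol E edge w (A - B)"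
  unfolding hvol_def using sum.Int_Diff[OF assms, of "hdeg E edge w" B] by simp

lemma hcut_nonneg:
  assumes H: "hypergraph_sf V E edge w"
  shows "hcut E edge w S \<ge> 0"
proof -
  have "\<forall>e\<in>E. \<forall>A. A \<subseteq> edge e \<longrightarrow> w e A \<ge> 0" using hsf_D3[OF H] .
  thus ?thesis unfolding hcut_def by (intro sum_nonneg) auto
qed

lemma aux_frac: "(x::real) > 0 \<Longrightarrow> y > 0 \<Longrightarrow> C / x + C / y = C * (x + y) / (x * y)"
  by (simp add: field_simps)

lemma aux_le: "(p::real) > 0 \<Longrightarrow> q > 0 \<Longrightarrow> r * q \<le> p \<Longrightarrow> r / p \<le> 1 / q"
  by (simp add: field_simps)

lemma aux_mul: "(V::real) > 0 \<Longrightarrow> r / V * (C * V / p) = C * (r / p)"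
  by simp

theorem mainTheorem8:
  fixes V :: "'a set" and E :: "'e set" and edge :: "'e \<Rightarrow> 'a set"
    and w :: "'e \<Rightarrow> 'a set \<Rightarrow> real" and R :: "'a set" and \<epsilon> :: real
  assumes H: "hypergraph_sf V E edge w"
    and RV: "R \<subseteq> V"
    and volR: "hvol E edge w R > 0"
    and volRc: "hvol E edge w (V - R) > 0"
    and eps: "\<epsilon> \<ge> hvol E edge w R / hvol E edge w (V - R)"
  shows "\<forall>S. S \<subseteq> V \<and> Omega V E edge w R \<epsilon> S > 0 \<longrightarrow>
           hvol E edge w S > 0 \<and> hvol E edge w (V - S) > 0 \<and>
           ereal (hvol E edge w (V - R) / hvol E edge w V * ncut V E edge w S)
             \<le> HLC V E edge w R \<epsilon> S"
proof (intro allI impI, elim conjE)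
  fix S assume SV: "S \<subseteq> V" and Om: "Omega V E edge w R \<epsilon> S > 0"
  have fV: "finite V" using hsf_D1[OF H] .
  have fS: "finite S" using fV SV finite_subset by blast
  have fSc: "finite (V - S)" using fV by auto
  define vol where "vol = hvol E edge w"
  define a where "a = vol (S \<inter> R)"
  define b where "b = vol (S - R)"
  define c where "c = vol ((V - S) \<inter> R)"
  define d where "d = vol ((V - S) - R)"
  have nn: "\<And>X. vol X \<ge> 0" unfolding vol_def by (rule hvol_nonneg[OF H])
  have a0: "a \<ge> 0" and b0: "b \<ge> 0" and c0: "c \<ge> 0" and d0: "d \<ge> 0"
    unfolding a_def b_def c_def d_def using nn by auto
  have vS: "vol S = a + b" unfolding a_def b_def vol_def by (rule hvol_split[OF fS, of E edge w R])
  have vSc: "vol (V - S) = c + d" unfolding c_def d_def vol_def by (rule hvol_split[OF fSc, of E edge w R])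
  have vV: "vol V = vol S + vol (V - S)"
  proof -
    have "V \<inter> S = S" using SV by blast
    thus ?thesis unfolding vol_def using hvol_split[OF fV, of E edge w S] by simp
  qed
  have "R = (S \<inter> R) \<union> ((V - S) \<inter> R)" using RV by auto
  have vR: "vol R = a + c"
  proof -
    have fR: "finite R" using fV RV finite_subset by blast
    have "vol R = vol (R \<inter> S) + vol (R - S)" unfolding vol_def by (rule hvol_split[OF fR, of E edge w S])
    moreover have "R \<inter> S = S \<inter> R" by auto
    moreover have "R - S = (V - S) \<inter> R" using RV by auto
    ultimately show ?thesis unfolding a_def c_def by simp
  qed
  have vRc: "vol (V - R) = b + d"
  proof -
    have fR: "finite (V - R)" using fV by auto
    have "vol (V - R) = vol ((V - R) \<inter> S) + vol ((V - R) - S)"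
      unfolding vol_def by (rule hvol_split[OF fR, of E edge w S])
    moreover have "(V - R) \<inter> S = S - R" using SV by auto
    moreover have "(V - R) - S = (V - S) - R" by auto
    ultimately show ?thesis unfolding b_def d_def by simp
  qed
  have SVR: "S \<inter> (V - R) = S - R" using SV by auto
  define \<Omega> where "\<Omega> = a - \<epsilon> * b"
  have OmEq: "Omega V E edge w R \<epsilon> S = \<Omega>"
    unfolding Omega_def \<Omega>_def a_def b_def vol_def SVR by simp
  have Opos: "\<Omega> > 0" using Om OmEq by simp
  have bdpos: "b + d > 0" using volRc vRc vol_def by simp
  have eps': "\<epsilon> \<ge> (a + c) / (b + d)" using eps vR vRc vol_def by simp
  have epsb: "\<epsilon> * (b + d) \<ge> a + c" using eps' bdpos by (simp add: pos_divide_le_eq)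
  have key: "(b + d) * \<Omega> \<le> a * d - c * b"
  proof -
    have "(a + c) * b \<le> (\<epsilon> * (b + d)) * b" using mult_right_mono[OF epsb b0] .
    hence "\<epsilon> * b * (b + d) \<ge> (a + c) * b" by (simp add: mult_ac)
    thus ?thesis unfolding \<Omega>_def by (simp add: algebra_simps)
  qed
  have apos: "a > 0"
  proof -
    have "(a + c) / (b + d) \<ge> 0" using a0 c0 bdpos by simp
    hence "\<epsilon> \<ge> 0" using eps' by linarith
    hence "\<epsilon> * b \<ge> 0" using b0 by simp
    thus ?thesis using Opos \<Omega>_def by simp
  qed
  have vSpos: "vol S > 0" using vS apos b0 by simp
  have vScpos: "vol (V - S) > 0"
  proof (rule ccontr)
    assume "\<not> vol (V - S) > 0"
    hence "c = 0" "d = 0" using vSc c0 d0 by auto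
    hence "(b + d) * \<Omega> \<le> 0" using key by simp
    moreover have "(b + d) * \<Omega> > 0" using bdpos Opos by simp
    ultimately show False by simp
  qed
  have prod: "vol (V - R) * \<Omega> \<le> vol S * vol (V - S)"
  proof -
    have "a * d - c * b \<le> (a + b) * (c + d)"
      using a0 b0 c0 d0 by (simp add: algebra_simps add_nonneg_nonneg mult_nonneg_nonneg)
    thus ?thesis using key vRc vS vSc by simp
  qed
  define C where "C = hcut E edge w S"
  have C0: "C \<ge> 0" unfolding C_def using hcut_nonneg[OF H] .
  have nc: "ncut V E edge w S = C * vol V / (vol S * vol (V - S))"
    unfolding ncut_def C_def vol_def[symmetric] hcut_compl[OF H] vV
    using aux_frac[OF vSpos vScpos] by simp
  have vVpos: "vol V > 0" using vV vSpos vScpos by simp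
  have lhs: "vol (V - R) / vol V * ncut V E edge w S = C * (vol (V - R) / (vol S * vol (V - S)))"
    unfolding nc using aux_mul[OF vVpos] by simp
  have "vol (V - R) / (vol S * vol (V - S)) \<le> 1 / \<Omega>"
    using aux_le[OF _ Opos prod] vSpos vScpos by simp
  hence "C * (vol (V - R) / (vol S * vol (V - S))) \<le> C / \<Omega>"
    using C0 mult_left_mono by fastforce
  hence ineq: "vol (V - R) / vol V * ncut V E edge w S \<le> C / \<Omega>" using lhs by simp
  have "HLC V E edge w R \<epsilon> S = ereal (C / \<Omega>)"
    unfolding HLC_def OmEq C_def using Opos by simp
  thus "hvol E edge w S > 0 \<and> hvol E edge w (V - S) > 0 \<and>
           ereal (hvol E edge w (V - R) / hvol E edge w V * ncut V E edge w S)
             \<le> HLC V E edge w R \<epsilon> S"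
    using ineq vSpos vScpos unfolding vol_def by simp
qed

end
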